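(* Let $m,d$ be integers with $3\leq m<d$. Let $\mathcal{H}_A=\mathbb{C}^m\otimes\mathbb{C}^d$ and $\mathcal{H}_B=\mathbb{C}^m\otimes\mathbb{C}^d$. Let $F_m$ denote the swap of Alice's and Bob's $\mathbb{C}^m$ factors and $F_d$ the swap of Alice's and Bob's $\mathbb{C}^d$ factors, and $\mathbb{1}_m,\mathbb{1}_d$ the corresponding identities on $\mathbb{C}^m\otimes\mathbb{C}^m$ and $\mathbb{C}^d\otimes\mathbb{C}^d$. For real $\epsilon,\delta$ let $$\rho=\mathbb{1}_m\otimes\mathbb{1}_d+\frac{d\epsilon-1}{d}\,\mathbb{1}_m\otimes F_d+\frac{m\epsilon-1}{m}\,F_m\otimes\mathbb{1}_d+\frac{1-(m+d)\epsilon+dm\delta}{dm}\,F_m\otimes F_d,$$ and assume $\rho$ is positive semidefinite. If $$\epsilon m^2(d^2-1)+dm\delta(m-d)<0,$$ then $\rho$ is entangled, i.e. not a nonnegative combination of product operators $\rho^A\otimes\rho^B$ with $\rho^A\geq0$ on $\mathcal{H}_A$ and $\rho^B\geq 0$ on $\mathcal{H}_B$.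
   Context: A swap operator on $\mathbb{C}^k\otimes\mathbb{C}^k$ is $\sum_{i,j}|ij\rangle\langle ji|$; here $F_m$ and $F_d$ act on the pair of $\mathbb{C}^m$ factors and the pair of $\mathbb{C}^d$ factors respectively (one factor of each pair belonging to Alice and one to Bob), and the tensor products above are with respect to this regrouping of $\mathcal{H}_A\otimes\mathcal{H}_B$. *)

theory Defs
  imports "Jordan_Normal_Form.Matrix" "Jordan_Normal_Form.Conjugate"
begin

text \<open>A basis vector |i> of C^k is index i < k; a basis vector |i j> of
  C^k (x) C^l is index i*l + j (standard Kronecker ordering).\<close>

definition kron :: "complex mat \<Rightarrow> complex mat \<Rightarrow> complex mat" where
  "kron A B = mat (dim_row A * dim_row B) (dim_col A * dim_col B)
     (\<lambda>(i,j). A $$ (i div dim_row B, j div dim_col B) * B $$ (i mod dim_row B, j mod dim_col B))"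

text \<open>Swap operator on C^k (x) C^k:  sum_{i,j} |i j><j i|.\<close>
definition swap_op :: "nat \<Rightarrow> complex mat" where
  "swap_op k = mat (k*k) (k*k)
     (\<lambda>(r,c). if r div k = c mod k \<and> r mod k = c div k then 1 else 0)"

definition psd :: "nat \<Rightarrow> complex mat \<Rightarrow> bool" where
  "psd n A \<longleftrightarrow> A \<in> carrier_mat n n \<and>
     (\<forall>i<n. \<forall>j<n. A $$ (i,j) = cnj (A $$ (j,i))) \<and>
     (\<forall>v \<in> carrier_vec n. Im (conjugate v \<bullet> (A *\<^sub>v v)) = 0 \<and> Re (conjugate v \<bullet> (A *\<^sub>v v)) \<ge> 0)"

text \<open>The space (C^m (x) C^m) (x) (C^d (x) C^d), with basis |a1 b1 a2 b2>
  (a1,b1 < m the C^m factors of Alice/Bob, a2,b2 < d the C^d factors of Alice/Bob), has index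
  (a1*m + b1)*(d*d) + (a2*d + b2).  The space H_A (x) H_B = (C^m (x) C^d) (x) (C^m (x) C^d),
  with basis |a1 a2 b1 b2>, has index (a1*d + a2)*(m*d) + (b1*d + b2).
  regroup_idx maps the first index to the second.\<close>
definition regroup_idx :: "nat \<Rightarrow> nat \<Rightarrow> nat \<Rightarrow> nat" where
  "regroup_idx m d r =
     (let x = r div (d*d); y = r mod (d*d);
          a1 = x div m; b1 = x mod m; a2 = y div d; b2 = y mod d
      in (a1*d + a2)*(m*d) + (b1*d + b2))"

definition regroup_mat :: "nat \<Rightarrow> nat \<Rightarrow> complex mat" where
  "regroup_mat m d = mat (m*d*(m*d)) (m*m*(d*d))
     (\<lambda>(s,r). if s = regroup_idx m d r then 1 else 0)"

definition regroup :: "nat \<Rightarrow> nat \<Rightarrow> complex mat \<Rightarrow> complex mat" where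
  "regroup m d X = regroup_mat m d * X * transpose_mat (regroup_mat m d)"

definition rho_op :: "nat \<Rightarrow> nat \<Rightarrow> real \<Rightarrow> real \<Rightarrow> complex mat" where
  "rho_op m d \<epsilon> \<delta> = regroup m d
     (kron (1\<^sub>m (m*m)) (1\<^sub>m (d*d))
      + complex_of_real ((d*\<epsilon> - 1)/d) \<cdot>\<^sub>m kron (1\<^sub>m (m*m)) (swap_op d)
      + complex_of_real ((m*\<epsilon> - 1)/m) \<cdot>\<^sub>m kron (swap_op m) (1\<^sub>m (d*d))
      + complex_of_real ((1 - (m+d)*\<epsilon> + d*m*\<delta>)/(d*m)) \<cdot>\<^sub>m kron (swap_op m) (swap_op d))"

text \<open>Separable operator on H_A (x) H_B with dim H_A = nA, dim H_B = nB: a finite sum of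
  products rho_A (x) rho_B of positive semidefinite operators (nonnegative coefficients are
  absorbed into the PSD factors).\<close>
definition separable :: "nat \<Rightarrow> nat \<Rightarrow> complex mat \<Rightarrow> bool" where
  "separable nA nB \<rho> \<longleftrightarrow> (\<exists>xs :: (complex mat \<times> complex mat) list.
     (\<forall>(a,b) \<in> set xs. psd nA a \<and> psd nB b) \<and>
     \<rho> = foldr (\<lambda>(a,b) acc. kron a b + acc) xs (0\<^sub>m (nA*nB) (nA*nB)))"

end

theory Submission
  imports Defs
begin


definition sesq :: "'i set \<Rightarrow> ('i \<Rightarrow> 'i \<Rightarrow> complex) \<Rightarrow> ('i \<Rightarrow> complex) \<Rightarrow> ('i \<Rightarrow> complex) \<Rightarrow> complex" where
  "sesq S M v w = (\<Sum>p\<in>S. \<Sum>q\<in>S. cnj (v p) * M p q * w q)"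

lemma sesq_add_left: "sesq S M (\<lambda>p. v p + w p) z = sesq S M v z + sesq S M w z"
  by (simp add: sesq_def algebra_simps sum.distrib)
lemma sesq_add_right: "sesq S M z (\<lambda>p. v p + w p) = sesq S M z v + sesq S M z w"
  by (simp add: sesq_def algebra_simps sum.distrib)
lemma sesq_scale_left: "sesq S M (\<lambda>p. c * v p) z = cnj c * sesq S M v z"
  by (simp add: sesq_def sum_distrib_left algebra_simps)
lemma sesq_scale_right: "sesq S M z (\<lambda>p. c * v p) = c * sesq S M z v"
  by (simp add: sesq_def sum_distrib_left algebra_simps)
lemma sesq_cong: "(\<And>p. p \<in> S \<Longrightarrow> v p = v' p) \<Longrightarrow> (\<And>p. p \<in> S \<Longrightarrow> w p = w' p) \<Longrightarrow> sesq S M v w = sesq S M v' w'"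
  unfolding sesq_def by (intro sum.cong) auto
lemma sesq_mat: "sesq S (\<lambda>p q. c * M p q - N p q) v w = c * sesq S M v w - sesq S N v w"
  by (simp add: sesq_def sum_distrib_left algebra_simps sum_subtractf)

lemma sesq_lin: "sesq S M (\<lambda>p. a * v p + b * w p) (\<lambda>p. a * v p + b * w p) =
   cnj a * a * sesq S M v v + cnj a * b * sesq S M v w + cnj b * a * sesq S M w v + cnj b * b * sesq S M w w"
  by (simp add: sesq_add_left sesq_add_right sesq_scale_left sesq_scale_right algebra_simps)

lemma qf_split:
  fixes t :: real
  assumes "t \<noteq> 0"
  shows "sesq S M (\<lambda>p. v p + w p) (\<lambda>p. v p + w p) + 
     sesq S M (\<lambda>p. of_real t * v p + of_real (-1/t) * w p) (\<lambda>p. of_real t * v p + of_real (-1/t) * w p)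
   = of_real (1 + t^2) * sesq S M v v + of_real (1 + 1/t^2) * sesq S M w w"
proof -
  have "sesq S M (\<lambda>p. v p + w p) (\<lambda>p. v p + w p) = sesq S M (\<lambda>p. 1 * v p + 1 * w p) (\<lambda>p. 1 * v p + 1 * w p)"
    by simp
  also have "\<dots> = sesq S M v v + sesq S M v w + sesq S M w v + sesq S M w w"
    unfolding sesq_lin by simp
  finally have 1: "sesq S M (\<lambda>p. v p + w p) (\<lambda>p. v p + w p) = sesq S M v v + sesq S M v w + sesq S M w v + sesq S M w w" .
  have 2: "sesq S M (\<lambda>p. of_real t * v p + of_real (-1/t) * w p) (\<lambda>p. of_real t * v p + of_real (-1/t) * w p)
     = of_real (t*t) * sesq S M v v - sesq S M v w - sesq S M w v + of_real (1/(t*t)) * sesq S M w w"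
    unfolding sesq_lin using assms by (simp add: field_simps)
  show ?thesis unfolding 1 2 using assms by (simp add: field_simps power2_eq_square)
qed

lemma qf_sum_bound:
  fixes n :: real
  assumes "n > 0" and psd: "\<And>x. Re (sesq S M x x) \<ge> 0"
  shows "Re (sesq S M (\<lambda>p. v p + w p) (\<lambda>p. v p + w p)) \<le> (1 + n) * Re (sesq S M v v) + (1 + 1/n) * Re (sesq S M w w)"
proof -
  define t where "t = sqrt n"
  have t: "t \<noteq> 0" "t^2 = n" using assms(1) by (auto simp: t_def)
  have "Re (sesq S M (\<lambda>p. v p + w p) (\<lambda>p. v p + w p)) + Re (sesq S M (\<lambda>p. of_real t * v p + of_real (-1/t) * w p) (\<lambda>p. of_real t * v p + of_real (-1/t) * w p))
     = (1 + n) * Re (sesq S M v v) + (1 + 1/n) * Re (sesq S M w w)"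
    using arg_cong[OF qf_split[OF t(1), of S M v w], of Re] t(2) by simp
  moreover have "Re (sesq S M (\<lambda>p. of_real t * v p + of_real (-1/t) * w p) (\<lambda>p. of_real t * v p + of_real (-1/t) * w p)) \<ge> 0"
    by (rule psd)
  ultimately show ?thesis by linarith
qed



lemma sesq_delta:
  assumes "finite D" "z \<in> D" "w \<in> D"
  shows "sesq D c (\<lambda>t. if t = z then 1 else 0) (\<lambda>t. if t = w then 1 else 0) = c z w"
proof -
  have "sesq D c (\<lambda>t. if t = z then 1 else 0) (\<lambda>t. if t = w then 1 else 0)
     = (\<Sum>p\<in>D. if p = z then (\<Sum>q\<in>D. if q = w then c p q else 0) else 0)"
    unfolding sesq_def by (auto intro!: sum.cong)
  also have "\<dots> = c z w" using assms by simp
  finally show ?thesis .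
qed

lemma lagrange_bound:
  fixes D :: "'a set"
  assumes fin: "finite D" and psd: "\<And>h. Re (sesq D c h h) \<ge> 0"
  shows "Re (sesq D c f f) \<le> (\<Sum>x\<in>D. (cmod (f x))^2) * Re (\<Sum>z\<in>D. c z z)"
proof -
  define e :: "'a \<Rightarrow> 'a \<Rightarrow> complex" where "e = (\<lambda>z t. if t = z then (1::complex) else 0)"
  define N where "N = (\<Sum>x\<in>D. f x * cnj (f x))"
  define T where "T = (\<Sum>z\<in>D. c z z)"
  have N: "N = of_real (\<Sum>x\<in>D. (cmod (f x))^2)"
    unfolding N_def of_real_sum by (intro sum.cong refl) (metis complex_norm_square of_real_power)
  have key: "\<And>z w. z \<in> D \<Longrightarrow> w \<in> D \<Longrightarrow> sesq D c (\<lambda>t. cnj (f w) * e z t + (- cnj (f z)) * e w t) (\<lambda>t. cnj (f w) * e z t + (- cnj (f z)) * e w t)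
     = f w * cnj (f w) * c z z - cnj (f z) * c z w * f w - cnj (f w) * c w z * f z + f z * cnj (f z) * c w w"
    unfolding sesq_lin e_def using fin by (simp add: sesq_delta algebra_simps)
  have "(\<Sum>z\<in>D. \<Sum>w\<in>D. sesq D c (\<lambda>t. cnj (f w) * e z t + (- cnj (f z)) * e w t) (\<lambda>t. cnj (f w) * e z t + (- cnj (f z)) * e w t))
     = (\<Sum>z\<in>D. \<Sum>w\<in>D. f w * cnj (f w) * c z z - cnj (f z) * c z w * f w - cnj (f w) * c w z * f z + f z * cnj (f z) * c w w)"
    using key by (intro sum.cong refl) auto
  also have "\<dots> = 2 * N * T - 2 * sesq D c f f"
  proof -
    have a: "(\<Sum>z\<in>D. \<Sum>w\<in>D. f w * cnj (f w) * c z z) = N * T"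
      unfolding N_def T_def sum_product by (subst sum.swap) (simp add: algebra_simps)
    have b: "(\<Sum>z\<in>D. \<Sum>w\<in>D. f z * cnj (f z) * c w w) = N * T"
      unfolding N_def T_def sum_product by (simp add: algebra_simps)
    have c1: "(\<Sum>z\<in>D. \<Sum>w\<in>D. cnj (f z) * c z w * f w) = sesq D c f f"
      unfolding sesq_def ..
    have c2: "(\<Sum>z\<in>D. \<Sum>w\<in>D. cnj (f w) * c w z * f z) = sesq D c f f"
      unfolding sesq_def by (rule sum.swap)
    show ?thesis
      by (simp add: sum_subtractf sum.distrib a b c1 c2)
  qed
  finally have eq: "(\<Sum>z\<in>D. \<Sum>w\<in>D. sesq D c (\<lambda>t. cnj (f w) * e z t + (- cnj (f z)) * e w t) (\<lambda>t. cnj (f w) * e z t + (- cnj (f z)) * e w t))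
     = 2 * N * T - 2 * sesq D c f f" .
  have "0 \<le> Re (\<Sum>z\<in>D. \<Sum>w\<in>D. sesq D c (\<lambda>t. cnj (f w) * e z t + (- cnj (f z)) * e w t) (\<lambda>t. cnj (f w) * e z t + (- cnj (f z)) * e w t))"
    by (simp add: sum_nonneg psd)
  then have "0 \<le> Re (2 * N * T - 2 * sesq D c f f)" by (simp only: eq)
  then show ?thesis unfolding N T_def by simp
qed



lemma sum_prod_split: "(\<Sum>p\<in>A\<times>D. F p) = (\<Sum>i\<in>A. \<Sum>x\<in>D. F (i,x))"
  by (simp add: sum.cartesian_product split_def)

lemma sum4_swap: "(\<Sum>i\<in>A. \<Sum>z\<in>D. \<Sum>j\<in>A. \<Sum>w\<in>D. X i z j w) = (\<Sum>z\<in>D. \<Sum>w\<in>D. \<Sum>i\<in>A. \<Sum>j\<in>A. X i z j w)"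
proof -
  have "(\<Sum>i\<in>A. \<Sum>z\<in>D. \<Sum>j\<in>A. \<Sum>w\<in>D. X i z j w) = (\<Sum>z\<in>D. \<Sum>i\<in>A. \<Sum>j\<in>A. \<Sum>w\<in>D. X i z j w)"
    by (rule sum.swap)
  also have "\<dots> = (\<Sum>z\<in>D. \<Sum>i\<in>A. \<Sum>w\<in>D. \<Sum>j\<in>A. X i z j w)"
    by (intro sum.cong refl, rule sum.swap)
  also have "\<dots> = (\<Sum>z\<in>D. \<Sum>w\<in>D. \<Sum>i\<in>A. \<Sum>j\<in>A. X i z j w)"
    by (intro sum.cong refl, rule sum.swap)
  finally show ?thesis .
qed

definition K2 :: "'a set \<Rightarrow> 'b set \<Rightarrow> ('a\<times>'b \<Rightarrow> 'a\<times>'b \<Rightarrow> complex) \<Rightarrow> ('a\<times>'b \<Rightarrow> 'a\<times>'b \<Rightarrow> complex)" where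
  "K2 A D B = (\<lambda>(i,x) (j,y). if x = y then (\<Sum>z\<in>D. B (i,z) (j,z)) else 0)"

lemma sesq_K2:
  assumes "finite D"
  shows "sesq (A\<times>D) (K2 A D B) v w = (\<Sum>i\<in>A. \<Sum>j\<in>A. (\<Sum>z\<in>D. B (i,z) (j,z)) * (\<Sum>x\<in>D. cnj (v (i,x)) * w (j,x)))"
proof -
  have "sesq (A\<times>D) (K2 A D B) v w = (\<Sum>i\<in>A. \<Sum>x\<in>D. \<Sum>j\<in>A. \<Sum>y\<in>D. cnj (v (i,x)) * (if x = y then (\<Sum>z\<in>D. B (i,z) (j,z)) else 0) * w (j,y))"
    unfolding sesq_def sum_prod_split K2_def by simp
  also have "\<dots> = (\<Sum>i\<in>A. \<Sum>x\<in>D. \<Sum>j\<in>A. cnj (v (i,x)) * (\<Sum>z\<in>D. B (i,z) (j,z)) * w (j,x))"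
  proof (intro sum.cong refl)
    fix i x j assume "x \<in> D"
    have "(\<Sum>y\<in>D. cnj (v (i,x)) * (if x = y then (\<Sum>z\<in>D. B (i,z) (j,z)) else 0) * w (j,y))
       = (\<Sum>y\<in>D. if x = y then cnj (v (i,x)) * (\<Sum>z\<in>D. B (i,z) (j,z)) * w (j,y) else 0)"
      by (intro sum.cong refl) auto
    also have "\<dots> = cnj (v (i,x)) * (\<Sum>z\<in>D. B (i,z) (j,z)) * w (j,x)"
      using assms \<open>x \<in> D\<close> by simp
    finally show "(\<Sum>y\<in>D. cnj (v (i,x)) * (if x = y then (\<Sum>z\<in>D. B (i,z) (j,z)) else 0) * w (j,y))
       = cnj (v (i,x)) * (\<Sum>z\<in>D. B (i,z) (j,z)) * w (j,x)" .
  qed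
  also have "\<dots> = (\<Sum>i\<in>A. \<Sum>j\<in>A. \<Sum>x\<in>D. cnj (v (i,x)) * (\<Sum>z\<in>D. B (i,z) (j,z)) * w (j,x))"
    by (intro sum.cong refl, rule sum.swap)
  also have "\<dots> = (\<Sum>i\<in>A. \<Sum>j\<in>A. (\<Sum>z\<in>D. B (i,z) (j,z)) * (\<Sum>x\<in>D. cnj (v (i,x)) * w (j,x)))"
    by (simp add: sum_distrib_left algebra_simps)
  finally show ?thesis .
qed

lemma tensor_B:
  "sesq (A\<times>D) B (\<lambda>(i,x). g i * h x) (\<lambda>(i,x). g i * h x)
   = sesq D (\<lambda>z w. \<Sum>i\<in>A. \<Sum>j\<in>A. cnj (g i) * B (i,z) (j,w) * g j) h h"
proof -
  have "sesq (A\<times>D) B (\<lambda>(i,x). g i * h x) (\<lambda>(i,x). g i * h x)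
     = (\<Sum>i\<in>A. \<Sum>z\<in>D. \<Sum>j\<in>A. \<Sum>w\<in>D. cnj (h z) * (cnj (g i) * B (i,z) (j,w) * g j) * h w)"
    unfolding sesq_def sum_prod_split sum_distrib_right by (simp add: algebra_simps)
  also have "\<dots> = (\<Sum>z\<in>D. \<Sum>w\<in>D. \<Sum>i\<in>A. \<Sum>j\<in>A. cnj (h z) * (cnj (g i) * B (i,z) (j,w) * g j) * h w)"
    by (rule sum4_swap)
  also have "\<dots> = sesq D (\<lambda>z w. \<Sum>i\<in>A. \<Sum>j\<in>A. cnj (g i) * B (i,z) (j,w) * g j) h h"
    unfolding sesq_def by (simp add: sum_distrib_left sum_distrib_right)
  finally show ?thesis .
qed

lemma tensor_bound:
  assumes fA: "finite A" and fD: "finite D" and psd: "\<And>x. Re (sesq (A\<times>D) B x x) \<ge> 0"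
    and nf: "(\<Sum>x\<in>D. (cmod (f x))^2) = 1"
  shows "Re (sesq (A\<times>D) B (\<lambda>(i,x). g i * f x) (\<lambda>(i,x). g i * f x))
     \<le> Re (sesq (A\<times>D) (K2 A D B) (\<lambda>(i,x). g i * f x) (\<lambda>(i,x). g i * f x))"
proof -
  define c where "c = (\<lambda>z w. \<Sum>i\<in>A. \<Sum>j\<in>A. cnj (g i) * B (i,z) (j,w) * g j)"
  have pc: "Re (sesq D c h h) \<ge> 0" for h
    using psd[of "\<lambda>(i,x). g i * h x"] unfolding tensor_B c_def .
  have "Re (sesq D c f f) \<le> (\<Sum>x\<in>D. (cmod (f x))^2) * Re (\<Sum>z\<in>D. c z z)"
    by (rule lagrange_bound[OF fD pc])
  also have "\<dots> = Re (\<Sum>z\<in>D. c z z)" using nf by simp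
  also have "(\<Sum>z\<in>D. c z z) = sesq (A\<times>D) (K2 A D B) (\<lambda>(i,x). g i * f x) (\<lambda>(i,x). g i * f x)"
  proof -
    have n1: "(\<Sum>x\<in>D. cnj (f x) * f x) = 1"
    proof -
      have "(\<Sum>x\<in>D. cnj (f x) * f x) = of_real (\<Sum>x\<in>D. (cmod (f x))^2)"
        unfolding of_real_sum by (intro sum.cong refl) (metis complex_norm_square mult.commute)
      then show ?thesis using nf by simp
    qed
    have "sesq (A\<times>D) (K2 A D B) (\<lambda>(i,x). g i * f x) (\<lambda>(i,x). g i * f x)
       = (\<Sum>i\<in>A. \<Sum>j\<in>A. (\<Sum>z\<in>D. B (i,z) (j,z)) * (\<Sum>x\<in>D. cnj (g i * f x) * (g j * f x)))"
      unfolding sesq_K2[OF fD] by simp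
    also have "\<dots> = (\<Sum>i\<in>A. \<Sum>j\<in>A. (\<Sum>z\<in>D. B (i,z) (j,z)) * (cnj (g i) * g j))"
    proof (intro sum.cong refl)
      fix i j
      have "(\<Sum>x\<in>D. cnj (g i * f x) * (g j * f x)) = cnj (g i) * g j * (\<Sum>x\<in>D. cnj (f x) * f x)"
        by (simp add: sum_distrib_left algebra_simps)
      then show "(\<Sum>z\<in>D. B (i,z) (j,z)) * (\<Sum>x\<in>D. cnj (g i * f x) * (g j * f x)) = (\<Sum>z\<in>D. B (i,z) (j,z)) * (cnj (g i) * g j)"
        using n1 by simp
    qed
    also have "\<dots> = (\<Sum>z\<in>D. c z z)"
      unfolding c_def sum_distrib_right
      by (subst sum.swap, intro sum.cong refl, subst sum.swap) (simp add: algebra_simps)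
    finally show ?thesis by simp
  qed
  finally show ?thesis unfolding c_def[symmetric] tensor_B .
qed



definition ipf :: "'b set \<Rightarrow> ('b \<Rightarrow> complex) \<Rightarrow> ('b \<Rightarrow> complex) \<Rightarrow> complex" where
  "ipf D f h = (\<Sum>x\<in>D. cnj (f x) * h x)"

lemma ipf_lin: "ipf D f (\<lambda>x. a x - c * f x) = ipf D f a - c * ipf D f f"
  unfolding ipf_def by (simp add: algebra_simps sum_subtractf sum_distrib_left)

lemma sesq_zero_vec: "(\<And>p. p \<in> S \<Longrightarrow> u p = 0) \<Longrightarrow> sesq S M u u = 0"
  unfolding sesq_def by simp

lemma normalize_exists:
  fixes hn :: "'b \<Rightarrow> complex"
  assumes fD: "finite D" and x0: "x0 \<in> D"
  shows "\<exists>f. (\<Sum>x\<in>D. (cmod (f x))^2) = 1 \<and> (\<forall>x\<in>D. hn x = ipf D f hn * f x)"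
proof (cases "(\<Sum>x\<in>D. (cmod (hn x))^2) = 0")
  case True
  then have z: "\<forall>x\<in>D. hn x = 0"
    using sum_nonneg_eq_0_iff[OF fD, of "\<lambda>x. (cmod (hn x))^2"] by auto
  define f where "f = (\<lambda>x. if x = x0 then (1::complex) else 0)"
  have "(\<Sum>x\<in>D. (cmod (f x))^2) = (\<Sum>x\<in>D. if x = x0 then 1 else 0)"
    unfolding f_def by (intro sum.cong refl) auto
  also have "\<dots> = 1" using fD x0 by simp
  finally have 1: "(\<Sum>x\<in>D. (cmod (f x))^2) = 1" .
  have "ipf D f hn = 0" unfolding ipf_def using z by simp
  then show ?thesis using z 1 by (intro exI[of _ f]) auto
next
  case False
  define N where "N = (\<Sum>x\<in>D. (cmod (hn x))^2)"
  have "N \<ge> 0" unfolding N_def by (simp add: sum_nonneg)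
  then have Npos: "N > 0" using False unfolding N_def by linarith
  define r where "r = sqrt N"
  have r: "r > 0" "r^2 = N" using Npos by (auto simp: r_def)
  define f where "f = (\<lambda>x. hn x / of_real r)"
  have "(\<Sum>x\<in>D. (cmod (f x))^2) = (\<Sum>x\<in>D. (cmod (hn x))^2 / r^2)"
    unfolding f_def by (intro sum.cong refl) (simp add: norm_divide power_divide)
  also have "\<dots> = N / r^2" unfolding N_def by (simp add: sum_divide_distrib)
  also have "\<dots> = 1" using r Npos by simp
  finally have 1: "(\<Sum>x\<in>D. (cmod (f x))^2) = 1" .
  have "ipf D f hn = (\<Sum>x\<in>D. cnj (hn x) * hn x) / of_real r"
    unfolding ipf_def f_def by (simp add: sum_divide_distrib)
  also have "(\<Sum>x\<in>D. cnj (hn x) * hn x) = of_real N"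
    unfolding N_def of_real_sum by (intro sum.cong refl) (metis complex_norm_square mult.commute)
  finally have ip: "ipf D f hn = of_real (N / r)" by simp
  have "\<forall>x\<in>D. hn x = of_real (N / r) * f x"
    unfolding f_def using r Npos by (simp add: field_simps power2_eq_square flip: of_real_mult)
  then have "\<forall>x\<in>D. hn x = ipf D f hn * f x" unfolding ip .
  then show ?thesis using 1 by blast
qed

lemma lemR_ind:
  fixes B :: "'a\<times>'b \<Rightarrow> 'a\<times>'b \<Rightarrow> complex"
  assumes fA: "finite A" and fD: "finite D" and x0: "x0 \<in> D"
    and psd: "\<And>x. Re (sesq (A\<times>D) B x x) \<ge> 0"
  shows "\<forall>u g h. (\<forall>i\<in>A. \<forall>x\<in>D. u (i,x) = (\<Sum>k<n. g k i * h k x)) \<longrightarrow>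
          Re (sesq (A\<times>D) B u u) \<le> real n * Re (sesq (A\<times>D) (K2 A D B) u u)"
proof (induction n)
  case 0
  show ?case
  proof (intro allI impI)
    fix u :: "'a\<times>'b \<Rightarrow> complex" and g :: "nat \<Rightarrow> 'a \<Rightarrow> complex" and h :: "nat \<Rightarrow> 'b \<Rightarrow> complex"
    assume "\<forall>i\<in>A. \<forall>x\<in>D. u (i,x) = (\<Sum>k<0. g k i * h k x)"
    then have "\<And>p. p \<in> A\<times>D \<Longrightarrow> u p = 0" by auto
    then have "sesq (A\<times>D) B u u = 0" "sesq (A\<times>D) (K2 A D B) u u = 0" by (auto intro!: sesq_zero_vec)
    then show "Re (sesq (A\<times>D) B u u) \<le> real 0 * Re (sesq (A\<times>D) (K2 A D B) u u)" by simp
  qed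
next
  case (Suc n)
  show ?case
  proof (intro allI impI)
    fix u :: "'a\<times>'b \<Rightarrow> complex" and g :: "nat \<Rightarrow> 'a \<Rightarrow> complex" and h :: "nat \<Rightarrow> 'b \<Rightarrow> complex"
    assume u: "\<forall>i\<in>A. \<forall>x\<in>D. u (i,x) = (\<Sum>k<Suc n. g k i * h k x)"
    obtain f where nf: "(\<Sum>x\<in>D. (cmod (f x))^2) = 1" and hn: "\<forall>x\<in>D. h n x = ipf D f (h n) * f x"
      using normalize_exists[OF fD x0] by blast
    have ff: "ipf D f f = 1"
    proof -
      have "ipf D f f = of_real (\<Sum>x\<in>D. (cmod (f x))^2)"
        unfolding ipf_def of_real_sum by (intro sum.cong refl) (metis complex_norm_square mult.commute)
      then show ?thesis using nf by simp
    qed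
    define h' where "h' = (\<lambda>k x. h k x - ipf D f (h k) * f x)"
    define g' where "g' = (\<lambda>i. \<Sum>k<Suc n. ipf D f (h k) * g k i)"
    define u' where "u' = (\<lambda>(i,x). \<Sum>k<n. g k i * h' k x)"
    define t where "t = (\<lambda>(i::'a,x::'b). g' i * f x)"
    have hn': "\<forall>x\<in>D. h' n x = 0" using hn unfolding h'_def by simp
    have dec: "u p = t p + u' p" if "p \<in> A\<times>D" for p
    proof -
      obtain i x where p0: "p = (i,x)" by (cases p)
      have p: "p = (i,x)" "i \<in> A" "x \<in> D" using that p0 by auto
      have "u p = (\<Sum>k<Suc n. g k i * (ipf D f (h k) * f x + h' k x))"
        using u p unfolding h'_def by simp
      also have "\<dots> = g' i * f x + (\<Sum>k<Suc n. g k i * h' k x)"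
        unfolding g'_def by (simp add: algebra_simps sum.distrib sum_distrib_right sum_distrib_left)
      also have "(\<Sum>k<Suc n. g k i * h' k x) = (\<Sum>k<n. g k i * h' k x)"
        using hn' p(3) by simp
      finally show ?thesis unfolding t_def u'_def p by simp
    qed
    have orth: "ipf D f (\<lambda>x. u' (j,x)) = 0" for j
    proof -
      have "ipf D f (\<lambda>x. u' (j,x)) = (\<Sum>k<n. g k j * ipf D f (h' k))"
        unfolding ipf_def u'_def by (simp add: sum_distrib_left algebra_simps) (rule sum.swap)
      also have "\<dots> = 0"
      proof (intro sum.neutral ballI)
        fix k
        have "ipf D f (h' k) = ipf D f (h k) - ipf D f (h k) * ipf D f f"
          unfolding h'_def by (rule ipf_lin)
        then show "g k j * ipf D f (h' k) = 0" using ff by simp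
      qed
      finally show ?thesis .
    qed
    have cross1: "sesq (A\<times>D) (K2 A D B) t u' = 0"
    proof -
      have "sesq (A\<times>D) (K2 A D B) t u' = (\<Sum>i\<in>A. \<Sum>j\<in>A. (\<Sum>z\<in>D. B (i,z) (j,z)) * (cnj (g' i) * ipf D f (\<lambda>x. u' (j,x))))"
        unfolding sesq_K2[OF fD] t_def ipf_def by (simp add: sum_distrib_left algebra_simps)
      then show ?thesis using orth by simp
    qed
    have cross2: "sesq (A\<times>D) (K2 A D B) u' t = 0"
    proof -
      have "sesq (A\<times>D) (K2 A D B) u' t = (\<Sum>i\<in>A. \<Sum>j\<in>A. (\<Sum>z\<in>D. B (i,z) (j,z)) * (g' j * cnj (ipf D f (\<lambda>x. u' (i,x)))))"
        unfolding sesq_K2[OF fD] t_def ipf_def by (simp add: sum_distrib_left algebra_simps)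
      then show ?thesis using orth by simp
    qed
    have eqB: "sesq (A\<times>D) B u u = sesq (A\<times>D) B (\<lambda>p. t p + u' p) (\<lambda>p. t p + u' p)"
      by (rule sesq_cong) (auto simp: dec)
    have eqK: "sesq (A\<times>D) (K2 A D B) u u = sesq (A\<times>D) (K2 A D B) t t + sesq (A\<times>D) (K2 A D B) u' u'"
    proof -
      have "sesq (A\<times>D) (K2 A D B) u u = sesq (A\<times>D) (K2 A D B) (\<lambda>p. t p + u' p) (\<lambda>p. t p + u' p)"
        by (rule sesq_cong) (auto simp: dec)
      also have "\<dots> = sesq (A\<times>D) (K2 A D B) t t + sesq (A\<times>D) (K2 A D B) u' u'"
        by (simp add: sesq_add_left sesq_add_right cross1 cross2)
      finally show ?thesis .
    qed
    have tb: "Re (sesq (A\<times>D) B t t) \<le> Re (sesq (A\<times>D) (K2 A D B) t t)"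
      unfolding t_def by (rule tensor_bound[OF fA fD psd nf])
    have IH: "Re (sesq (A\<times>D) B u' u') \<le> real n * Re (sesq (A\<times>D) (K2 A D B) u' u')"
      by (rule Suc.IH[rule_format, of u' g h']) (simp add: u'_def)
    show "Re (sesq (A\<times>D) B u u) \<le> real (Suc n) * Re (sesq (A\<times>D) (K2 A D B) u u)"
    proof (cases "n = 0")
      case True
      then have "sesq (A\<times>D) B u u = sesq (A\<times>D) B t t"
        by (intro sesq_cong) (auto simp: dec u'_def)
      moreover have "sesq (A\<times>D) (K2 A D B) u u = sesq (A\<times>D) (K2 A D B) t t"
        using True by (intro sesq_cong) (auto simp: dec u'_def)
      ultimately show ?thesis using tb True by simp
    next
      case False
      then have np: "real n > 0" by simp
      have "Re (sesq (A\<times>D) B u u) \<le> (1 + real n) * Re (sesq (A\<times>D) B t t) + (1 + 1/real n) * Re (sesq (A\<times>D) B u' u')"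
        unfolding eqB by (rule qf_sum_bound[OF np psd])
      also have "\<dots> \<le> (1 + real n) * Re (sesq (A\<times>D) (K2 A D B) t t) + (1 + 1/real n) * (real n * Re (sesq (A\<times>D) (K2 A D B) u' u'))"
        using tb IH np by (intro add_mono mult_left_mono) auto
      also have "\<dots> = real (Suc n) * Re (sesq (A\<times>D) (K2 A D B) u u)"
        unfolding eqK using np by (simp add: field_simps)
      finally show ?thesis .
    qed
  qed
qed

lemma lemR:
  fixes B :: "nat\<times>nat \<Rightarrow> nat\<times>nat \<Rightarrow> complex"
  assumes "0 < d" and psd: "\<And>x. Re (sesq ({..<m}\<times>{..<d}) B x x) \<ge> 0"
  shows "Re (sesq ({..<m}\<times>{..<d}) B u u) \<le> real m * Re (sesq ({..<m}\<times>{..<d}) (K2 {..<m} {..<d} B) u u)"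
proof -
  have H:  "\<forall>u g h. (\<forall>i\<in>{..<m}. \<forall>x\<in>{..<d}. u (i,x) = (\<Sum>k<m. g k i * h k x)) \<longrightarrow>
          Re (sesq ({..<m}\<times>{..<d}) B u u) \<le> real m * Re (sesq ({..<m}\<times>{..<d}) (K2 {..<m} {..<d} B) u u)"
    using lemR_ind[of "{..<m}" "{..<d}" 0 B m] assms by simp
  show ?thesis
    by (rule H[rule_format, of u "\<lambda>k i. if i = k then (1::complex) else 0" "\<lambda>k x. u (k,x)"])
      (simp add: if_distrib if_distribR cong: if_cong)
qed



definition herm :: "'i set \<Rightarrow> ('i \<Rightarrow> 'i \<Rightarrow> complex) \<Rightarrow> bool" where
  "herm S a = (\<forall>p\<in>S. \<forall>q\<in>S. a p q = cnj (a q p))"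

definition psdq :: "'i set \<Rightarrow> ('i \<Rightarrow> 'i \<Rightarrow> complex) \<Rightarrow> bool" where
  "psdq S a = (\<forall>v. Re (sesq S a v v) \<ge> 0)"

lemma sesq_e_left:
  assumes "finite S" "k \<in> S"
  shows "sesq S M (\<lambda>t. if t = k then 1 else 0) v = (\<Sum>q\<in>S. M k q * v q)"
proof -
  have "sesq S M (\<lambda>t. if t = k then 1 else 0) v = (\<Sum>p\<in>S. if p = k then (\<Sum>q\<in>S. M p q * v q) else 0)"
    unfolding sesq_def by (auto intro!: sum.cong)
  then show ?thesis using assms by simp
qed

lemma sesq_e_right:
  assumes "finite S" "k \<in> S"
  shows "sesq S M v (\<lambda>t. if t = k then 1 else 0) = (\<Sum>p\<in>S. cnj (v p) * M p k)"
proof -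
  have "sesq S M v (\<lambda>t. if t = k then 1 else 0) = (\<Sum>p\<in>S. \<Sum>q\<in>S. if q = k then cnj (v p) * M p q else 0)"
    unfolding sesq_def by (auto intro!: sum.cong)
  then show ?thesis using assms by simp
qed

lemma psd_diag:
  assumes "finite S" "k \<in> S" "psdq S a" "herm S a"
  shows "Re (a k k) \<ge> 0" "Im (a k k) = 0"
proof -
  have "Re (sesq S a (\<lambda>t. if t = k then 1 else 0) (\<lambda>t. if t = k then 1 else 0)) \<ge> 0"
    using assms(3) unfolding psdq_def by blast
  then show "Re (a k k) \<ge> 0" using sesq_delta[OF assms(1) assms(2) assms(2)] by simp
  have "a k k = cnj (a k k)" using assms(2,4) unfolding herm_def by blast
  then show "Im (a k k) = 0" by (metis cnj.sel(2) equal_neg_zero)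
qed

lemma psd_zero_row:
  assumes fS: "finite S" and k: "k \<in> S" and j: "j \<in> S" and psd: "psdq S a" and h: "herm S a" and z: "a k k = 0"
  shows "a k j = 0"
proof (cases "j = k")
  case True then show ?thesis using z by simp
next
  case False
  define ek where "ek = (\<lambda>t. if t = k then (1::complex) else 0)"
  define ej where "ej = (\<lambda>t. if t = j then (1::complex) else 0)"
  have Q: "sesq S a (\<lambda>p. t * ek p + 1 * ej p) (\<lambda>p. t * ek p + 1 * ej p) = cnj t * a k j + t * a j k + a j j" for t
    unfolding sesq_lin ek_def ej_def using fS k j z by (simp add: sesq_delta)
  have ajk: "a j k = cnj (a k j)" using h j k unfolding herm_def by blast
  show ?thesis
  proof (rule ccontr)
    assume ne: "a k j \<noteq> 0"
    define c where "c = (cmod (a k j))^2"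
    have cpos: "c > 0" using ne unfolding c_def by simp
    have cc: "cnj (a k j) * a k j = of_real c" unfolding c_def by (metis complex_norm_square mult.commute)
    define r where "r = (\<bar>Re (a j j)\<bar> + 1) / (2 * c)"
    define t where "t = - of_real r * a k j"
    have "Re (sesq S a (\<lambda>p. t * ek p + 1 * ej p) (\<lambda>p. t * ek p + 1 * ej p)) \<ge> 0"
      using psd unfolding psdq_def by blast
    also have "Re (sesq S a (\<lambda>p. t * ek p + 1 * ej p) (\<lambda>p. t * ek p + 1 * ej p)) = - 2 * r * c + Re (a j j)"
    proof -
      have "cnj t * a k j + t * a j k = - 2 * of_real r * of_real c"
        unfolding t_def ajk using cc by (simp add: algebra_simps)
      then show ?thesis unfolding Q by (simp add: algebra_simps)
    qed
    finally have "0 \<le> - 2 * r * c + Re (a j j)" .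
    moreover have "2 * r * c = \<bar>Re (a j j)\<bar> + 1" unfolding r_def using cpos by simp
    ultimately show False by linarith
  qed
qed

lemma schur_psd:
  assumes fS: "finite S" and k: "k \<in> S" and psd: "psdq S a" and h: "herm S a" and nz: "a k k \<noteq> 0"
  shows "psdq S (\<lambda>p q. a p q - a p k * a k q / a k k)" "herm S (\<lambda>p q. a p q - a p k * a k q / a k k)"
proof -
  have im: "Im (a k k) = 0" using psd_diag[OF fS k psd h] by simp
  then have akr: "cnj (a k k) = a k k" by (simp add: complex_eq_iff)
  show "herm S (\<lambda>p q. a p q - a p k * a k q / a k k)"
    unfolding herm_def
  proof (intro ballI)
    fix p q assume p: "p \<in> S" and q: "q \<in> S"
    have "a p q = cnj (a q p)" "a p k = cnj (a k p)" "a k q = cnj (a q k)"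
      using h p q k unfolding herm_def by blast+
    then show "a p q - a p k * a k q / a k k = cnj (a q p - a q k * a k p / a k k)"
      using akr by (simp add: algebra_simps)
  qed
  show "psdq S (\<lambda>p q. a p q - a p k * a k q / a k k)"
    unfolding psdq_def
  proof
    fix v
    define ek where "ek = (\<lambda>t. if t = k then (1::complex) else 0)"
    define s where "s = (\<Sum>q\<in>S. a k q * v q)"
    define r where "r = (\<Sum>p\<in>S. cnj (v p) * a p k)"
    have rs: "r = cnj s"
    proof -
      have "cnj s = (\<Sum>p\<in>S. cnj (a k p) * cnj (v p))" unfolding s_def by simp
      also have "\<dots> = r" unfolding r_def
      proof (intro sum.cong refl)
        fix p assume "p \<in> S"
        then have "a p k = cnj (a k p)" using h k unfolding herm_def by blast
        then show "cnj (a k p) * cnj (v p) = cnj (v p) * a p k" by simp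
      qed
      finally show ?thesis by simp
    qed
    have e1: "sesq S a v ek = r" unfolding ek_def r_def by (rule sesq_e_right[OF fS k])
    have e2: "sesq S a ek v = s" unfolding ek_def s_def by (rule sesq_e_left[OF fS k])
    have e3: "sesq S a ek ek = a k k" unfolding ek_def by (rule sesq_delta[OF fS k k])
    define t where "t = s / a k k"
    have "sesq S a (\<lambda>p. 1 * v p + (- t) * ek p) (\<lambda>p. 1 * v p + (- t) * ek p)
       = sesq S a v v - t * r - cnj t * s + cnj t * t * a k k"
      unfolding sesq_lin e1 e2 e3 by simp
    also have "\<dots> = sesq S a v v - r * s / a k k"
      unfolding t_def rs using akr nz by (simp add: field_simps)
    also have "\<dots> = sesq S (\<lambda>p q. a p q - a p k * a k q / a k k) v v"
      unfolding sesq_def r_def s_def sum_product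
      by (simp add: sum_subtractf sum_divide_distrib algebra_simps)
    finally have eq: "sesq S a (\<lambda>p. 1 * v p + (- t) * ek p) (\<lambda>p. 1 * v p + (- t) * ek p) = sesq S (\<lambda>p q. a p q - a p k * a k q / a k k) v v" .
    show "0 \<le> Re (sesq S (\<lambda>p q. a p q - a p k * a k q / a k k) v v)"
      using psd unfolding psdq_def eq[symmetric] by blast
  qed
qed



lemma tr_pos_ind:
  assumes fS: "finite S" and fT: "finite T" and pK: "psdq S K"
  shows "\<forall>a. herm S a \<and> psdq S a \<and> (\<forall>p\<in>S. \<forall>q\<in>S. (p \<notin> T \<or> q \<notin> T) \<longrightarrow> a p q = 0)
      \<longrightarrow> Re (\<Sum>p\<in>S. \<Sum>q\<in>S. a p q * K q p) \<ge> 0"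
  using fT
proof (induction T rule: finite_induct)
  case empty
  show ?case by simp
next
  case (insert k T)
  show ?case
  proof (intro allI impI, elim conjE)
    fix a assume h: "herm S a" and psd: "psdq S a" and supp: "\<forall>p\<in>S. \<forall>q\<in>S. (p \<notin> insert k T \<or> q \<notin> insert k T) \<longrightarrow> a p q = 0"
    show "Re (\<Sum>p\<in>S. \<Sum>q\<in>S. a p q * K q p) \<ge> 0"
    proof (cases "k \<in> S")
      case False
      have "\<forall>p\<in>S. \<forall>q\<in>S. (p \<notin> T \<or> q \<notin> T) \<longrightarrow> a p q = 0"
        using supp False by auto
      then show ?thesis using insert.IH h psd by blast
    next
      case k: True
      show ?thesis
      proof (cases "a k k = 0")
        case True
        have row: "a k j = 0" if "j \<in> S" for j
          by (rule psd_zero_row[OF fS k that psd h True])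
        have col: "a j k = 0" if "j \<in> S" for j
        proof -
          have "a j k = cnj (a k j)" using h k that unfolding herm_def by blast
          then show ?thesis using row[OF that] by simp
        qed
        have "\<forall>p\<in>S. \<forall>q\<in>S. (p \<notin> T \<or> q \<notin> T) \<longrightarrow> a p q = 0"
        proof (intro ballI impI)
          fix p q assume p: "p \<in> S" and q: "q \<in> S" and pq: "p \<notin> T \<or> q \<notin> T"
          show "a p q = 0"
          proof (cases "p = k \<or> q = k")
            case True then show ?thesis using row col p q by auto
          next
            case False then show ?thesis using supp p q pq by auto
          qed
        qed
        then show ?thesis using insert.IH h psd by blast
      next
        case nz: False
        define a' where "a' = (\<lambda>p q. a p q - a p k * a k q / a k k)"
        have h': "herm S a'" and p': "psdq S a'"
          unfolding a'_def using schur_psd[OF fS k psd h nz] by auto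
        have col: "a p k = 0" if "p \<in> S" "p \<notin> insert k T" for p using supp that k by blast
        have row: "a k q = 0" if "q \<in> S" "q \<notin> insert k T" for q using supp that k by blast
        have s': "\<forall>p\<in>S. \<forall>q\<in>S. (p \<notin> T \<or> q \<notin> T) \<longrightarrow> a' p q = 0"
        proof (intro ballI impI)
          fix p q assume p: "p \<in> S" and q: "q \<in> S" and pq: "p \<notin> T \<or> q \<notin> T"
          show "a' p q = 0"
          proof (cases "p = k")
            case True then show ?thesis unfolding a'_def using nz by simp
          next
            case pk: False
            show ?thesis
            proof (cases "q = k")
              case True then show ?thesis unfolding a'_def using nz by simp
            next
              case qk: False
              have "p \<notin> insert k T \<or> q \<notin> insert k T" using pq pk qk by auto
              then have "a p q = 0" and "a p k * a k q = 0" using supp p q col row by auto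
              then show ?thesis unfolding a'_def by simp
            qed
          qed
        qed
        have IH: "Re (\<Sum>p\<in>S. \<Sum>q\<in>S. a' p q * K q p) \<ge> 0"
          using insert.IH h' p' s' by blast
        define w where "w = (\<lambda>p. a p k)"
        have im: "Im (a k k) = 0" and re: "Re (a k k) \<ge> 0" using psd_diag[OF fS k psd h] by auto
        then have repos: "Re (a k k) > 0" using nz by (metis complex_eq_iff order_le_less zero_complex.sel)
        have akk: "a k k = of_real (Re (a k k))" using im by (simp add: complex_eq_iff)
        have "(\<Sum>p\<in>S. \<Sum>q\<in>S. a p q * K q p) = (\<Sum>p\<in>S. \<Sum>q\<in>S. a' p q * K q p) + (\<Sum>p\<in>S. \<Sum>q\<in>S. a p k * a k q * K q p) / a k k"
          unfolding a'_def by (simp add: algebra_simps sum.distrib sum_divide_distrib sum_subtractf)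
        also have "(\<Sum>p\<in>S. \<Sum>q\<in>S. a p k * a k q * K q p) = sesq S K w w"
        proof -
          have "(\<Sum>p\<in>S. \<Sum>q\<in>S. a p k * a k q * K q p) = (\<Sum>p\<in>S. \<Sum>q\<in>S. cnj (w q) * K q p * w p)"
          proof (intro sum.cong refl)
            fix p q assume "q \<in> S"
            then have "a k q = cnj (a q k)" using h k unfolding herm_def by blast
            then show "a p k * a k q * K q p = cnj (w q) * K q p * w p" unfolding w_def by simp
          qed
          also have "\<dots> = sesq S K w w" unfolding sesq_def by (rule sum.swap)
          finally show ?thesis .
        qed
        finally have eq: "(\<Sum>p\<in>S. \<Sum>q\<in>S. a p q * K q p) = (\<Sum>p\<in>S. \<Sum>q\<in>S. a' p q * K q p) + sesq S K w w / of_real (Re (a k k))"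
          using akk by metis
        have "Re (sesq S K w w / of_real (Re (a k k))) = Re (sesq S K w w) / Re (a k k)"
          by (simp add: Re_divide_of_real)
        moreover have "Re (sesq S K w w) \<ge> 0" using pK unfolding psdq_def by blast
        ultimately have "Re (sesq S K w w / of_real (Re (a k k))) \<ge> 0" using repos by simp
        then show ?thesis unfolding eq using IH by simp
      qed
    qed
  qed
qed

lemma tr_pos:
  assumes "finite S" "psdq S K" "herm S a" "psdq S a"
  shows "Re (\<Sum>p\<in>S. \<Sum>q\<in>S. a p q * K q p) \<ge> 0"
  using tr_pos_ind[OF assms(1) assms(1) assms(2)] assms(3,4) by blast



lemma key_pair:
  fixes A B :: "nat\<times>nat \<Rightarrow> nat\<times>nat \<Rightarrow> complex"
  assumes d: "0 < d" and hA: "herm ({..<m}\<times>{..<d}) A" and pA: "psdq ({..<m}\<times>{..<d}) A"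
    and pB: "psdq ({..<m}\<times>{..<d}) B"
  shows "Re (of_nat m * (\<Sum>i<m. \<Sum>x<d. \<Sum>j<m. \<Sum>z<d. A (i,x) (j,x) * B (j,z) (i,z))
      - (\<Sum>P\<in>{..<m}\<times>{..<d}. \<Sum>Q\<in>{..<m}\<times>{..<d}. A P Q * B Q P)) \<ge> 0"
proof -
  define S where "S = {..<m}\<times>{..<d}"
  define K where "K = (\<lambda>P Q. of_nat m * K2 {..<m} {..<d} B P Q - B P Q)"
  have pK: "psdq S K"
    unfolding psdq_def
  proof
    fix v
    have "sesq S K v v = of_nat m * sesq S (K2 {..<m} {..<d} B) v v - sesq S B v v"
      unfolding K_def by (rule sesq_mat)
    moreover have "Re (sesq S B v v) \<le> real m * Re (sesq S (K2 {..<m} {..<d} B) v v)"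
      unfolding S_def by (rule lemR[OF d]) (use pB in \<open>auto simp: psdq_def\<close>)
    ultimately show "0 \<le> Re (sesq S K v v)" by simp
  qed
  have X: "Re (\<Sum>P\<in>S. \<Sum>Q\<in>S. A P Q * K Q P) \<ge> 0"
    by (rule tr_pos) (use pK hA pA in \<open>auto simp: S_def\<close>)
  have E1: "(\<Sum>P\<in>S. \<Sum>Q\<in>S. A P Q * K Q P) = of_nat m * (\<Sum>P\<in>S. \<Sum>Q\<in>S. A P Q * K2 {..<m} {..<d} B Q P) - (\<Sum>P\<in>S. \<Sum>Q\<in>S. A P Q * B Q P)"
    unfolding K_def by (simp add: algebra_simps sum_subtractf sum_distrib_left)
  have E2: "(\<Sum>P\<in>S. \<Sum>Q\<in>S. A P Q * K2 {..<m} {..<d} B Q P) = (\<Sum>i<m. \<Sum>x<d. \<Sum>j<m. \<Sum>z<d. A (i,x) (j,x) * B (j,z) (i,z))"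
  proof -
    have "(\<Sum>P\<in>S. \<Sum>Q\<in>S. A P Q * K2 {..<m} {..<d} B Q P) = (\<Sum>i<m. \<Sum>x<d. \<Sum>j<m. \<Sum>y<d. A (i,x) (j,y) * (if y = x then (\<Sum>z<d. B (j,z) (i,z)) else 0))"
      unfolding S_def sum_prod_split K2_def by simp
    also have "\<dots> = (\<Sum>i<m. \<Sum>x<d. \<Sum>j<m. A (i,x) (j,x) * (\<Sum>z<d. B (j,z) (i,z)))"
    proof (intro sum.cong refl)
      fix i x j assume "x \<in> {..<d}"
      have "(\<Sum>y<d. A (i,x) (j,y) * (if y = x then (\<Sum>z<d. B (j,z) (i,z)) else 0)) = (\<Sum>y<d. if y = x then A (i,x) (j,y) * (\<Sum>z<d. B (j,z) (i,z)) else 0)"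
        by (intro sum.cong refl) auto
      then show "(\<Sum>y<d. A (i,x) (j,y) * (if y = x then (\<Sum>z<d. B (j,z) (i,z)) else 0)) = A (i,x) (j,x) * (\<Sum>z<d. B (j,z) (i,z))"
        using \<open>x \<in> {..<d}\<close> by simp
    qed
    also have "\<dots> = (\<Sum>i<m. \<Sum>x<d. \<Sum>j<m. \<Sum>z<d. A (i,x) (j,x) * B (j,z) (i,z))"
      by (simp add: sum_distrib_left)
    finally show ?thesis .
  qed
  show ?thesis using X unfolding E1 E2 unfolding S_def .
qed

lemma shift_sum: fixes F :: "nat \<Rightarrow> 'a::comm_monoid_add" shows "(\<Sum>p\<in>{i*d..<i*d+d}. F p) = (\<Sum>x<d. F (i*d+x))"
proof -
  have "(\<Sum>p\<in>{0+i*d..<d+i*d}. F p) = (\<Sum>x\<in>{0..<d}. F (x+i*d))"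
    by (rule sum.shift_bounds_nat_ivl)
  then show ?thesis by (simp add: add.commute atLeast0LessThan)
qed

lemma nat_pair_sum: fixes F :: "nat \<Rightarrow> 'a::comm_monoid_add" shows "(\<Sum>p<m*d. F p) = (\<Sum>i<m. \<Sum>x<d. F (i*d+x))"
  using sum.nat_group[of F d m] by (simp add: shift_sum)

lemma idx_bounds:
  fixes i x :: nat assumes "i < m" "x < d"
  shows "i*d + x < m*d" "(i*d+x) div d = i" "(i*d+x) mod d = x"
proof -
  have "i*d + x < i*d + d" using assms by simp
  also have "\<dots> = (i+1)*d" by simp
  also have "\<dots> \<le> m*d" using assms by (intro mult_right_mono) auto
  finally show "i*d + x < m*d" .
  show "(i*d+x) div d = i" "(i*d+x) mod d = x" using assms by auto
qed

definition pairm :: "nat \<Rightarrow> complex mat \<Rightarrow> nat\<times>nat \<Rightarrow> nat\<times>nat \<Rightarrow> complex" where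
  "pairm d a = (\<lambda>(i,x) (j,y). a $$ (i*d+x, j*d+y))"

lemma psd_pairm:
  assumes psd: "psd (m*d) a" and d: "0 < d"
  shows "herm ({..<m}\<times>{..<d}) (pairm d a)" "psdq ({..<m}\<times>{..<d}) (pairm d a)"
proof -
  have a: "a \<in> carrier_mat (m*d) (m*d)" and h: "\<And>i j. i < m*d \<Longrightarrow> j < m*d \<Longrightarrow> a $$ (i,j) = cnj (a $$ (j,i))"
    and q: "\<And>v. v \<in> carrier_vec (m*d) \<Longrightarrow> Re (conjugate v \<bullet> (a *\<^sub>v v)) \<ge> 0"
    using psd unfolding psd_def by blast+
  show "herm ({..<m}\<times>{..<d}) (pairm d a)"
    unfolding herm_def pairm_def
  proof (intro ballI)
    fix P Q assume P: "P \<in> {..<m}\<times>{..<d}" and Q: "Q \<in> {..<m}\<times>{..<d}"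
    obtain i x j y where PQ: "P = (i,x)" "Q = (j,y)" by (cases P, cases Q)
    have b: "i*d+x < m*d" "j*d+y < m*d" using P Q PQ idx_bounds by auto
    show "(case P of (i, x) \<Rightarrow> \<lambda>(j, y). a $$ (i * d + x, j * d + y)) Q =
          cnj ((case Q of (i, x) \<Rightarrow> \<lambda>(j, y). a $$ (i * d + x, j * d + y)) P)"
      unfolding PQ using h[OF b] by simp
  qed
  show "psdq ({..<m}\<times>{..<d}) (pairm d a)"
    unfolding psdq_def
  proof
    fix v :: "nat\<times>nat \<Rightarrow> complex"
    define w where "w = vec (m*d) (\<lambda>p. v (p div d, p mod d))"
    have wc: "w \<in> carrier_vec (m*d)" unfolding w_def by simp
    have "conjugate w \<bullet> (a *\<^sub>v w) = (\<Sum>p<m*d. cnj (v (p div d, p mod d)) * (\<Sum>q<m*d. a $$ (p,q) * v (q div d, q mod d)))"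
      unfolding scalar_prod_def w_def using a
      by (auto simp: mult_mat_vec_def atLeast0LessThan scalar_prod_def intro!: sum.cong)
    also have "\<dots> = sesq ({..<m}\<times>{..<d}) (pairm d a) v v"
      unfolding sesq_def sum_prod_split nat_pair_sum pairm_def
      by (auto simp: idx_bounds sum_distrib_left algebra_simps intro!: sum.cong)
    finally show "0 \<le> Re (sesq ({..<m}\<times>{..<d}) (pairm d a) v v)"
      using q[OF wc] by simp
  qed
qed



lemma pair_inj:
  fixes i x j y :: nat
  assumes "x < d" "y < d"
  shows "(i*d+x = j*d+y) \<longleftrightarrow> (i = j \<and> x = y)"
proof
  assume e: "i*d+x = j*d+y"
  have "(i*d+x) div d = (j*d+y) div d" "(i*d+x) mod d = (j*d+y) mod d" using e by simp_all
  then show "i = j \<and> x = y" using assms by simp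
qed simp

lemma kron_entry:
  assumes A: "A \<in> carrier_mat n n" and B: "B \<in> carrier_mat k k"
    and "p < n" "p' < n" "q < k" "q' < k"
  shows "kron A B $$ (p*k+q, p'*k+q') = A $$ (p,p') * B $$ (q,q')"
proof -
  have b: "p*k+q < n*k" "p'*k+q' < n*k" using idx_bounds assms by auto
  show ?thesis unfolding kron_def using A B b assms by simp
qed

lemma kron_carrier: "A \<in> carrier_mat n n \<Longrightarrow> B \<in> carrier_mat k k \<Longrightarrow> kron A B \<in> carrier_mat (n*k) (n*k)"
  unfolding kron_def by simp

lemma swap_carrier: "swap_op k \<in> carrier_mat (k*k) (k*k)"
  unfolding swap_op_def by simp

lemma swap_entry:
  assumes "x < k" "y < k" "x' < k" "y' < k"
  shows "swap_op k $$ (x*k+y, x'*k+y') = (if x = y' \<and> y = x' then 1 else 0)"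
proof -
  have b: "x*k+y < k*k" "x'*k+y' < k*k" using idx_bounds assms by auto
  show ?thesis unfolding swap_op_def using b assms by simp
qed

lemma one_entry:
  assumes "x < k" "y < k" "x' < k" "y' < k"
  shows "(1\<^sub>m (k*k) :: complex mat) $$ (x*k+y, x'*k+y') = (if x = x' \<and> y = y' then 1 else 0)"
proof -
  have b: "x*k+y < k*k" "x'*k+y' < k*k" using idx_bounds assms by auto
  show ?thesis using b assms by (simp add: pair_inj)
qed

lemma inj4:
  fixes a b c e a' b' c' e' m d :: nat
  assumes "a < m" "b < d" "c < m" "e < d" "a' < m" "b' < d" "c' < m" "e' < d"
  shows "((a*d+b)*(m*d)+(c*d+e) = (a'*d+b')*(m*d)+(c'*d+e')) \<longleftrightarrow> (a = a' \<and> b = b' \<and> c = c' \<and> e = e')"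
proof -
  have "c*d+e < m*d" "c'*d+e' < m*d" using idx_bounds(1)[of c m e d] idx_bounds(1)[of c' m e' d] assms by auto
  then have "((a*d+b)*(m*d)+(c*d+e) = (a'*d+b')*(m*d)+(c'*d+e')) \<longleftrightarrow> (a*d+b = a'*d+b' \<and> c*d+e = c'*d+e')"
    by (rule pair_inj)
  also have "\<dots> \<longleftrightarrow> (a = a' \<and> b = b' \<and> c = c' \<and> e = e')" using pair_inj[of b d b' a a'] pair_inj[of e d e' c c'] assms by auto
  finally show ?thesis .
qed

lemma inj4':
  fixes a b c e a' b' c' e' m d :: nat
  assumes "a < m" "b < m" "c < d" "e < d" "a' < m" "b' < m" "c' < d" "e' < d"
  shows "((a*m+b)*(d*d)+(c*d+e) = (a'*m+b')*(d*d)+(c'*d+e')) \<longleftrightarrow> (a = a' \<and> b = b' \<and> c = c' \<and> e = e')"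
proof -
  have "c*d+e < d*d" "c'*d+e' < d*d" using idx_bounds(1)[of c d e d] idx_bounds(1)[of c' d e' d] assms by auto
  then have "((a*m+b)*(d*d)+(c*d+e) = (a'*m+b')*(d*d)+(c'*d+e')) \<longleftrightarrow> (a*m+b = a'*m+b' \<and> c*d+e = c'*d+e')"
    by (rule pair_inj)
  also have "\<dots> \<longleftrightarrow> (a = a' \<and> b = b' \<and> c = c' \<and> e = e')" using pair_inj[of b m b' a a'] pair_inj[of e d e' c c'] assms by auto
  finally show ?thesis .
qed

lemma ridx:
  assumes r: "r < m*m*(d*d)" and d: "0 < d" and m: "0 < m"
    and a: "a1 < m" "a2 < d" "b1 < m" "b2 < d"
  shows "((a1*d+a2)*(m*d)+(b1*d+b2) = regroup_idx m d r) \<longleftrightarrow> r = (a1*m+b1)*(d*d)+(a2*d+b2)"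
proof -
  define x where "x = r div (d*d)"
  define y where "y = r mod (d*d)"
  have x: "x < m*m" unfolding x_def using r by (simp add: less_mult_imp_div_less)
  have y: "y < d*d" unfolding y_def using d by simp
  have x1: "x div m < m" using x by (simp add: less_mult_imp_div_less)
  have x2: "x mod m < m" using m by simp
  have y1: "y div d < d" using y by (simp add: less_mult_imp_div_less)
  have y2: "y mod d < d" using d by simp
  have ri: "regroup_idx m d r = (x div m * d + y div d)*(m*d) + (x mod m * d + y mod d)"
    unfolding regroup_idx_def x_def y_def Let_def ..
  have rr: "r = (x div m * m + x mod m)*(d*d) + (y div d * d + y mod d)"
    unfolding x_def y_def by (metis div_mult_mod_eq)
  show ?thesis
    unfolding ri using inj4[OF a x1 y1 x2 y2] inj4'[OF a(1) a(3) a(2) a(4) x1 x2 y1 y2] rr by metis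
qed

definition Mop :: "nat \<Rightarrow> nat \<Rightarrow> real \<Rightarrow> real \<Rightarrow> complex mat" where
  "Mop m d \<epsilon> \<delta> = kron (1\<^sub>m (m*m)) (1\<^sub>m (d*d))
      + complex_of_real ((d*\<epsilon> - 1)/d) \<cdot>\<^sub>m kron (1\<^sub>m (m*m)) (swap_op d)
      + complex_of_real ((m*\<epsilon> - 1)/m) \<cdot>\<^sub>m kron (swap_op m) (1\<^sub>m (d*d))
      + complex_of_real ((1 - (m+d)*\<epsilon> + d*m*\<delta>)/(d*m)) \<cdot>\<^sub>m kron (swap_op m) (swap_op d)"

lemma rho_Mop: "rho_op m d \<epsilon> \<delta> = regroup m d (Mop m d \<epsilon> \<delta>)"
  unfolding rho_op_def Mop_def ..

lemma Mop_carrier: "Mop m d \<epsilon> \<delta> \<in> carrier_mat (m*m*(d*d)) (m*m*(d*d))"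
  unfolding Mop_def by (intro add_carrier_mat smult_carrier_mat kron_carrier one_carrier_mat swap_carrier)

lemma Mop_entry:
  assumes a: "a1 < m" "b1 < m" "a2 < d" "b2 < d" "a1' < m" "b1' < m" "a2' < d" "b2' < d"
  shows "Mop m d \<epsilon> \<delta> $$ ((a1*m+b1)*(d*d)+(a2*d+b2), (a1'*m+b1')*(d*d)+(a2'*d+b2'))
    = (if a1 = a1' \<and> b1 = b1' then 1 else 0) * (if a2 = a2' \<and> b2 = b2' then 1 else 0)
    + complex_of_real ((d*\<epsilon> - 1)/d) * ((if a1 = a1' \<and> b1 = b1' then 1 else 0) * (if a2 = b2' \<and> b2 = a2' then 1 else 0))
    + complex_of_real ((m*\<epsilon> - 1)/m) * ((if a1 = b1' \<and> b1 = a1' then 1 else 0) * (if a2 = a2' \<and> b2 = b2' then 1 else 0))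
    + complex_of_real ((1 - (m+d)*\<epsilon> + d*m*\<delta>)/(d*m)) * ((if a1 = b1' \<and> b1 = a1' then 1 else 0) * (if a2 = b2' \<and> b2 = a2' then 1 else 0))"
proof -
  have p: "a1*m+b1 < m*m" "a1'*m+b1' < m*m" "a2*d+b2 < d*d" "a2'*d+b2' < d*d" using idx_bounds a by auto
  have b: "(a1*m+b1)*(d*d)+(a2*d+b2) < m*m*(d*d)" "(a1'*m+b1')*(d*d)+(a2'*d+b2') < m*m*(d*d)"
    using idx_bounds p by auto
  have c1: "(1\<^sub>m (m*m) :: complex mat) \<in> carrier_mat (m*m) (m*m)" "(1\<^sub>m (d*d) :: complex mat) \<in> carrier_mat (d*d) (d*d)"
    by auto
  have k1: "kron (1\<^sub>m (m*m)) (1\<^sub>m (d*d)) $$ ((a1*m+b1)*(d*d)+(a2*d+b2), (a1'*m+b1')*(d*d)+(a2'*d+b2'))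
     = (if a1 = a1' \<and> b1 = b1' then 1 else 0) * (if a2 = a2' \<and> b2 = b2' then 1 else 0)"
    by (subst kron_entry[OF _ _ p]) (auto simp: one_entry a)
  have k2: "kron (1\<^sub>m (m*m)) (swap_op d) $$ ((a1*m+b1)*(d*d)+(a2*d+b2), (a1'*m+b1')*(d*d)+(a2'*d+b2'))
     = (if a1 = a1' \<and> b1 = b1' then 1 else 0) * (if a2 = b2' \<and> b2 = a2' then 1 else 0)"
    by (subst kron_entry[OF _ _ p]) (auto simp: one_entry swap_entry swap_carrier a)
  have k3: "kron (swap_op m) (1\<^sub>m (d*d)) $$ ((a1*m+b1)*(d*d)+(a2*d+b2), (a1'*m+b1')*(d*d)+(a2'*d+b2'))
     = (if a1 = b1' \<and> b1 = a1' then 1 else 0) * (if a2 = a2' \<and> b2 = b2' then 1 else 0)"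
    by (subst kron_entry[OF _ _ p]) (auto simp: one_entry swap_entry swap_carrier a)
  have k4: "kron (swap_op m) (swap_op d) $$ ((a1*m+b1)*(d*d)+(a2*d+b2), (a1'*m+b1')*(d*d)+(a2'*d+b2'))
     = (if a1 = b1' \<and> b1 = a1' then 1 else 0) * (if a2 = b2' \<and> b2 = a2' then 1 else 0)"
    by (subst kron_entry[OF _ _ p]) (auto simp: one_entry swap_entry swap_carrier a)
  have kd: "dim_row (kron X Y) = dim_row X * dim_row Y" "dim_col (kron X Y) = dim_col X * dim_col Y" for X Y
    unfolding kron_def by simp_all
  have sd: "dim_row (swap_op k) = k*k" "dim_col (swap_op k) = k*k" for k unfolding swap_op_def by simp_all
  show ?thesis
    unfolding Mop_def using b
    by (simp add: kd sd k1 k2 k3 k4 del: One_nat_def)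
qed


lemma mult_entry:
  assumes "A \<in> carrier_mat a b" "B \<in> carrier_mat b c" "i < a" "j < c"
  shows "(A * B) $$ (i,j) = (\<Sum>k<b. A $$ (i,k) * B $$ (k,j))"
  using assms by (simp add: index_mult_mat scalar_prod_def atLeast0LessThan)

lemma R_carrier: "regroup_mat m d \<in> carrier_mat (m*d*(m*d)) (m*m*(d*d))"
  unfolding regroup_mat_def by simp

lemma S_bound:
  fixes a1 a2 b1 b2 :: nat
  assumes "a1 < m" "a2 < d" "b1 < m" "b2 < d"
  shows "(a1*d+a2)*(m*d)+(b1*d+b2) < m*d*(m*d)"
  using idx_bounds(1)[of a1 m a2 d] idx_bounds(1)[of b1 m b2 d] idx_bounds(1)[of "a1*d+a2" "m*d" "b1*d+b2" "m*d"] assms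
  by auto

lemma r0_bound:
  fixes a1 a2 b1 b2 :: nat
  assumes "a1 < m" "a2 < d" "b1 < m" "b2 < d"
  shows "(a1*m+b1)*(d*d)+(a2*d+b2) < m*m*(d*d)"
  using idx_bounds(1)[of a1 m b1 m] idx_bounds(1)[of a2 d b2 d] idx_bounds(1)[of "a1*m+b1" "m*m" "a2*d+b2" "d*d"] assms
  by auto

lemma R_row:
  fixes a1 a2 b1 b2 :: nat
  assumes m: "0 < m" and d: "0 < d" and a: "a1 < m" "a2 < d" "b1 < m" "b2 < d"
  shows "(\<Sum>r<m*m*(d*d). regroup_mat m d $$ ((a1*d+a2)*(m*d)+(b1*d+b2), r) * f r) = f ((a1*m+b1)*(d*d)+(a2*d+b2))"
proof -
  have sb: "(a1*d+a2)*(m*d)+(b1*d+b2) < m*d*(m*d)" by (rule S_bound[OF a])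
  have "(\<Sum>r<m*m*(d*d). regroup_mat m d $$ ((a1*d+a2)*(m*d)+(b1*d+b2), r) * f r)
      = (\<Sum>r<m*m*(d*d). if r = (a1*m+b1)*(d*d)+(a2*d+b2) then f r else 0)"
  proof (intro sum.cong refl)
    fix r assume r: "r \<in> {..<m*m*(d*d)}"
    then have "regroup_mat m d $$ ((a1*d+a2)*(m*d)+(b1*d+b2), r) = (if (a1*d+a2)*(m*d)+(b1*d+b2) = regroup_idx m d r then 1 else 0)"
      unfolding regroup_mat_def using sb by simp
    then show "regroup_mat m d $$ ((a1*d+a2)*(m*d)+(b1*d+b2), r) * f r = (if r = (a1*m+b1)*(d*d)+(a2*d+b2) then f r else 0)"
      using ridx[of r m d, OF _ d m a] r by simp
  qed
  also have "\<dots> = f ((a1*m+b1)*(d*d)+(a2*d+b2))"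
    using r0_bound[OF a] by simp
  finally show ?thesis .
qed

lemma regroup_entry:
  fixes a1 a2 b1 b2 a1' a2' b1' b2' :: nat
  assumes X: "X \<in> carrier_mat (m*m*(d*d)) (m*m*(d*d))" and m: "0 < m" and d: "0 < d"
    and a: "a1 < m" "a2 < d" "b1 < m" "b2 < d" and a': "a1' < m" "a2' < d" "b1' < m" "b2' < d"
  shows "regroup m d X $$ ((a1*d+a2)*(m*d)+(b1*d+b2), (a1'*d+a2')*(m*d)+(b1'*d+b2'))
     = X $$ ((a1*m+b1)*(d*d)+(a2*d+b2), (a1'*m+b1')*(d*d)+(a2'*d+b2'))"
proof -
  define R where "R = regroup_mat m d"
  define n where "n = m*m*(d*d)"
  define s where "s = (a1*d+a2)*(m*d)+(b1*d+b2)"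
  define s' where "s' = (a1'*d+a2')*(m*d)+(b1'*d+b2')"
  have Rc: "R \<in> carrier_mat (m*d*(m*d)) n" unfolding R_def n_def by (rule R_carrier)
  have Xc: "X \<in> carrier_mat n n" using X unfolding n_def .
  have RTc: "transpose_mat R \<in> carrier_mat n (m*d*(m*d))" using Rc by simp
  have RXc: "R * X \<in> carrier_mat (m*d*(m*d)) n" using Rc Xc by simp
  have sb: "s < m*d*(m*d)" "s' < m*d*(m*d)" unfolding s_def s'_def using S_bound a a' by auto
  have RX: "(R * X) $$ (s,k) = X $$ ((a1*m+b1)*(d*d)+(a2*d+b2), k)" if "k < n" for k
  proof -
    have "(R * X) $$ (s,k) = (\<Sum>r<n. R $$ (s,r) * X $$ (r,k))"
      by (rule mult_entry[OF Rc Xc sb(1) that])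
    also have "\<dots> = X $$ ((a1*m+b1)*(d*d)+(a2*d+b2), k)"
      unfolding R_def n_def s_def by (rule R_row[OF m d a])
    finally show ?thesis .
  qed
  have "regroup m d X $$ (s,s') = (R * X * transpose_mat R) $$ (s,s')" unfolding regroup_def R_def ..
  also have "\<dots> = (\<Sum>k<n. (R * X) $$ (s,k) * transpose_mat R $$ (k,s'))"
    by (rule mult_entry[OF RXc RTc sb(1) sb(2)])
  also have "\<dots> = (\<Sum>k<n. R $$ (s',k) * X $$ ((a1*m+b1)*(d*d)+(a2*d+b2), k))"
    using Rc sb by (intro sum.cong refl) (auto simp: RX)
  also have "\<dots> = X $$ ((a1*m+b1)*(d*d)+(a2*d+b2), (a1'*m+b1')*(d*d)+(a2'*d+b2'))"
    unfolding R_def n_def s'_def by (rule R_row[OF m d a'])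
  finally show ?thesis unfolding s_def s'_def .
qed



definition XF :: "nat \<Rightarrow> complex mat \<Rightarrow> complex" where
  "XF N X = (\<Sum>p<N. \<Sum>q<N. X $$ (p*N+q, q*N+p))"

definition XM :: "nat \<Rightarrow> nat \<Rightarrow> complex mat \<Rightarrow> complex" where
  "XM m d X = (\<Sum>a1<m. \<Sum>a2<d. \<Sum>b1<m. \<Sum>b2<d. X $$ ((a1*d+a2)*(m*d)+(b1*d+b2), (b1*d+a2)*(m*d)+(a1*d+b2)))"

definition Lf :: "nat \<Rightarrow> nat \<Rightarrow> complex mat \<Rightarrow> complex" where
  "Lf m d X = of_nat m * XM m d X - XF (m*d) X"

lemma rho_entry:
  fixes a1 a2 b1 b2 a1' a2' b1' b2' :: nat
  assumes m: "0 < m" and d: "0 < d"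
    and a: "a1 < m" "a2 < d" "b1 < m" "b2 < d" and a': "a1' < m" "a2' < d" "b1' < m" "b2' < d"
  shows "rho_op m d \<epsilon> \<delta> $$ ((a1*d+a2)*(m*d)+(b1*d+b2), (a1'*d+a2')*(m*d)+(b1'*d+b2'))
    = (if a1 = a1' \<and> b1 = b1' then 1 else 0) * (if a2 = a2' \<and> b2 = b2' then 1 else 0)
    + complex_of_real ((d*\<epsilon> - 1)/d) * ((if a1 = a1' \<and> b1 = b1' then 1 else 0) * (if a2 = b2' \<and> b2 = a2' then 1 else 0))
    + complex_of_real ((m*\<epsilon> - 1)/m) * ((if a1 = b1' \<and> b1 = a1' then 1 else 0) * (if a2 = a2' \<and> b2 = b2' then 1 else 0))
    + complex_of_real ((1 - (m+d)*\<epsilon> + d*m*\<delta>)/(d*m)) * ((if a1 = b1' \<and> b1 = a1' then 1 else 0) * (if a2 = b2' \<and> b2 = a2' then 1 else 0))"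
  unfolding rho_Mop regroup_entry[OF Mop_carrier m d a a']
  by (rule Mop_entry) (use a a' in auto)

lemma XF_rho:
  assumes m: "0 < m" and d: "0 < d"
  shows "XF (m*d) (rho_op m d \<epsilon> \<delta>) = of_nat (m*d) + complex_of_real ((d*\<epsilon> - 1)/d) * of_nat (m*d*d)
     + complex_of_real ((m*\<epsilon> - 1)/m) * of_nat (m*m*d) + complex_of_real ((1 - (m+d)*\<epsilon> + d*m*\<delta>)/(d*m)) * of_nat (m*m*d*d)"
proof -
  define c1 where "c1 = complex_of_real ((d*\<epsilon> - 1)/d)"
  define c2 where "c2 = complex_of_real ((m*\<epsilon> - 1)/m)"
  define c3 where "c3 = complex_of_real ((1 - (real m + real d)*\<epsilon> + real d*real m*\<delta>)/(real d*real m))"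
  have "XF (m*d) (rho_op m d \<epsilon> \<delta>) = (\<Sum>a1<m. \<Sum>a2<d. \<Sum>b1<m. \<Sum>b2<d. rho_op m d \<epsilon> \<delta> $$ ((a1*d+a2)*(m*d)+(b1*d+b2), (b1*d+b2)*(m*d)+(a1*d+a2)))"
    unfolding XF_def nat_pair_sum ..
  also have "\<dots> = (\<Sum>a1<m. \<Sum>a2<d. \<Sum>b1<m. \<Sum>b2<d. (of_bool (a1 = b1) * of_bool (a2 = b2) + c1 * of_bool (a1 = b1) + c2 * of_bool (a2=b2) + c3 :: complex))"
  proof (intro sum.cong refl)
    fix a1 a2 b1 b2 assume a: "a1 \<in> {..<m}" "a2 \<in> {..<d}" "b1 \<in> {..<m}" "b2 \<in> {..<d}"
    show "rho_op m d \<epsilon> \<delta> $$ ((a1*d+a2)*(m*d)+(b1*d+b2), (b1*d+b2)*(m*d)+(a1*d+a2)) = of_bool (a1 = b1) * of_bool (a2 = b2) + c1 * of_bool (a1 = b1) + c2 * of_bool (a2=b2) + c3"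
      using a unfolding c1_def c2_def c3_def by (subst rho_entry[OF m d]) (simp_all add: of_bool_def)
  qed
  also have "\<dots> = of_nat (m*d) + c1 * of_nat (m*d*d) + c2 * of_nat (m*m*d) + c3 * of_nat (m*m*d*d)"
    by (simp add: sum.distrib sum_distrib_left[symmetric] sum_distrib_right[symmetric] algebra_simps)
  finally show ?thesis unfolding c1_def c2_def c3_def .
qed

lemma XM_rho:
  assumes m: "0 < m" and d: "0 < d"
  shows "XM m d (rho_op m d \<epsilon> \<delta>) = of_nat (m*d*d) + complex_of_real ((d*\<epsilon> - 1)/d) * of_nat (m*d)
     + complex_of_real ((m*\<epsilon> - 1)/m) * of_nat (m*m*d*d) + complex_of_real ((1 - (m+d)*\<epsilon> + d*m*\<delta>)/(d*m)) * of_nat (m*m*d)"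
proof -
  define c1 where "c1 = complex_of_real ((d*\<epsilon> - 1)/d)"
  define c2 where "c2 = complex_of_real ((m*\<epsilon> - 1)/m)"
  define c3 where "c3 = complex_of_real ((1 - (real m + real d)*\<epsilon> + real d*real m*\<delta>)/(real d*real m))"
  have "XM m d (rho_op m d \<epsilon> \<delta>) = (\<Sum>a1<m. \<Sum>a2<d. \<Sum>b1<m. \<Sum>b2<d. (of_bool (a1 = b1) + c1 * (of_bool (a1 = b1) * of_bool (a2 = b2)) + c2 + c3 * of_bool (a2=b2) :: complex))"
    unfolding XM_def
  proof (intro sum.cong refl)
    fix a1 a2 b1 b2 assume a: "a1 \<in> {..<m}" "a2 \<in> {..<d}" "b1 \<in> {..<m}" "b2 \<in> {..<d}"
    show "rho_op m d \<epsilon> \<delta> $$ ((a1*d+a2)*(m*d)+(b1*d+b2), (b1*d+a2)*(m*d)+(a1*d+b2)) = of_bool (a1 = b1) + c1 * (of_bool (a1 = b1) * of_bool (a2 = b2)) + c2 + c3 * of_bool (a2=b2)"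
      using a unfolding c1_def c2_def c3_def by (subst rho_entry[OF m d]) (simp_all add: of_bool_def)
  qed
  also have "\<dots> = of_nat (m*d*d) + c1 * of_nat (m*d) + c2 * of_nat (m*m*d*d) + c3 * of_nat (m*m*d)"
    by (simp add: sum.distrib sum_distrib_left[symmetric] sum_distrib_right[symmetric] algebra_simps)
  finally show ?thesis unfolding c1_def c2_def c3_def .
qed

lemma Lf_rho:
  assumes m: "0 < m" and d: "0 < d"
  shows "Re (Lf m d (rho_op m d \<epsilon> \<delta>)) = real m * (\<epsilon> * real m ^ 2 * (real d ^ 2 - 1) + real d * real m*\<delta>*(real m - real d))"
proof -
  have "Lf m d (rho_op m d \<epsilon> \<delta>) = complex_of_real (real m * (real (m*d*d) + ((d*\<epsilon> - 1)/d) * real (m*d)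
     + ((m*\<epsilon> - 1)/m) * real (m*m*d*d) + ((1 - (m+d)*\<epsilon> + d*m*\<delta>)/(d*m)) * real (m*m*d))
     - (real (m*d) + ((d*\<epsilon> - 1)/d) * real (m*d*d)
     + ((m*\<epsilon> - 1)/m) * real (m*m*d) + ((1 - (m+d)*\<epsilon> + d*m*\<delta>)/(d*m)) * real (m*m*d*d)))"
    unfolding Lf_def XF_rho[OF m d] XM_rho[OF m d] by simp
  then have "Re (Lf m d (rho_op m d \<epsilon> \<delta>)) = real m * (real (m*d*d) + ((d*\<epsilon> - 1)/d) * real (m*d)
     + ((m*\<epsilon> - 1)/m) * real (m*m*d*d) + ((1 - (m+d)*\<epsilon> + d*m*\<delta>)/(d*m)) * real (m*m*d))
     - (real (m*d) + ((d*\<epsilon> - 1)/d) * real (m*d*d)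
     + ((m*\<epsilon> - 1)/m) * real (m*m*d) + ((1 - (m+d)*\<epsilon> + d*m*\<delta>)/(d*m)) * real (m*m*d*d))"
    by simp
  also have "\<dots> = real m * (\<epsilon> * real m ^ 2 * (real d ^ 2 - 1) + real d * real m*\<delta>*(real m - real d))"
    using m d by (simp add: field_simps power2_eq_square)
  finally show ?thesis .
qed



lemma Lf_kron:
  assumes pa: "psd (m*d) a" and pb: "psd (m*d) b" and d: "0 < d"
  shows "Re (Lf m d (kron a b)) \<ge> 0"
proof -
  define N where "N = m*d"
  have ac: "a \<in> carrier_mat N N" and bc: "b \<in> carrier_mat N N" using pa pb unfolding psd_def N_def by auto
  have XF: "XF (m*d) (kron a b) = (\<Sum>P\<in>{..<m}\<times>{..<d}. \<Sum>Q\<in>{..<m}\<times>{..<d}. pairm d a P Q * pairm d b Q P)"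
  proof -
    have "XF (m*d) (kron a b) = (\<Sum>p<N. \<Sum>q<N. a $$ (p,q) * b $$ (q,p))"
      unfolding XF_def N_def[symmetric] by (intro sum.cong refl) (simp add: kron_entry[OF ac bc])
    also have "\<dots> = (\<Sum>P\<in>{..<m}\<times>{..<d}. \<Sum>Q\<in>{..<m}\<times>{..<d}. pairm d a P Q * pairm d b Q P)"
      unfolding N_def nat_pair_sum sum_prod_split pairm_def by simp
    finally show ?thesis .
  qed
  have XM: "XM m d (kron a b) = (\<Sum>i<m. \<Sum>x<d. \<Sum>j<m. \<Sum>z<d. pairm d a (i,x) (j,x) * pairm d b (j,z) (i,z))"
    unfolding XM_def pairm_def
  proof (intro sum.cong refl)
    fix a1 a2 b1 b2 assume "a1 \<in> {..<m}" "a2 \<in> {..<d}" "b1 \<in> {..<m}" "b2 \<in> {..<d}"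
    then have b: "a1*d+a2 < N" "b1*d+a2 < N" "b1*d+b2 < N" "a1*d+b2 < N"
      unfolding N_def using idx_bounds(1) by auto
    show "kron a b $$ ((a1*d+a2)*(m*d)+(b1*d+b2), (b1*d+a2)*(m*d)+(a1*d+b2)) =
      (case (a1, a2) of (i, x) \<Rightarrow> \<lambda>(j, y). a $$ (i * d + x, j * d + y)) (b1, a2) *
      (case (b1, b2) of (i, x) \<Rightarrow> \<lambda>(j, y). b $$ (i * d + x, j * d + y)) (a1, b2)"
      unfolding N_def[symmetric] using kron_entry[OF ac bc b] by simp
  qed
  have hA: "herm ({..<m}\<times>{..<d}) (pairm d a)" and pA: "psdq ({..<m}\<times>{..<d}) (pairm d a)"
    using psd_pairm[OF pa d] by auto
  have pB: "psdq ({..<m}\<times>{..<d}) (pairm d b)" using psd_pairm[OF pb d] by auto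
  show ?thesis unfolding Lf_def XF XM by (rule key_pair[OF d hA pA pB])
qed

lemma Lf_add:
  assumes X: "X \<in> carrier_mat (m*d*(m*d)) (m*d*(m*d))" and Y: "Y \<in> carrier_mat (m*d*(m*d)) (m*d*(m*d))"
  shows "Lf m d (X + Y) = Lf m d X + Lf m d Y"
proof -
  have "XF (m*d) (X + Y) = XF (m*d) X + XF (m*d) Y"
    unfolding XF_def sum.distrib[symmetric]
  proof (intro sum.cong refl)
    fix p q assume "p \<in> {..<m*d}" "q \<in> {..<m*d}"
    then have "p*(m*d)+q < m*d*(m*d)" "q*(m*d)+p < m*d*(m*d)" using idx_bounds(1) by auto
    then show "(X + Y) $$ (p*(m*d)+q, q*(m*d)+p) = X $$ (p*(m*d)+q, q*(m*d)+p) + Y $$ (p*(m*d)+q, q*(m*d)+p)"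
      using X Y by simp
  qed
  moreover have "XM m d (X + Y) = XM m d X + XM m d Y"
  proof -
    have e: "(X + Y) $$ ((a1*d+a2)*(m*d)+(b1*d+b2), (b1*d+a2)*(m*d)+(a1*d+b2)) =
       X $$ ((a1*d+a2)*(m*d)+(b1*d+b2), (b1*d+a2)*(m*d)+(a1*d+b2)) + Y $$ ((a1*d+a2)*(m*d)+(b1*d+b2), (b1*d+a2)*(m*d)+(a1*d+b2))"
      if a: "a1 < m" "a2 < d" "b1 < m" "b2 < d" for a1 a2 b1 b2
    proof -
      have "(a1*d+a2)*(m*d)+(b1*d+b2) < m*d*(m*d)" "(b1*d+a2)*(m*d)+(a1*d+b2) < m*d*(m*d)"
        using S_bound a by auto
      then show ?thesis using X Y by simp
    qed
    show ?thesis unfolding XM_def sum.distrib[symmetric]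
      by (intro sum.cong refl) (simp add: e)
  qed
  ultimately show ?thesis unfolding Lf_def by (simp add: algebra_simps)
qed

lemma Lf_zero: "Lf m d (0\<^sub>m (m*d*(m*d)) (m*d*(m*d))) = 0"
proof -
  have e1: "(0\<^sub>m (m*d*(m*d)) (m*d*(m*d)) :: complex mat) $$ (p*(m*d)+q, q*(m*d)+p) = 0"
    if "p < m*d" "q < m*d" for p q
  proof -
    have "p*(m*d)+q < m*d*(m*d)" "q*(m*d)+p < m*d*(m*d)" using that idx_bounds(1) by auto
    then show ?thesis by simp
  qed
  have e2: "(0\<^sub>m (m*d*(m*d)) (m*d*(m*d)) :: complex mat) $$ ((a1*d+a2)*(m*d)+(b1*d+b2), (b1*d+a2)*(m*d)+(a1*d+b2)) = 0"
    if "a1 < m" "a2 < d" "b1 < m" "b2 < d" for a1 a2 b1 b2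
  proof -
    have "(a1*d+a2)*(m*d)+(b1*d+b2) < m*d*(m*d)" "(b1*d+a2)*(m*d)+(a1*d+b2) < m*d*(m*d)"
      using S_bound that by auto
    then show ?thesis by simp
  qed
  have "XF (m*d) (0\<^sub>m (m*d*(m*d)) (m*d*(m*d))) = 0"
    unfolding XF_def by (intro sum.neutral ballI) (simp add: e1)
  moreover have "XM m d (0\<^sub>m (m*d*(m*d)) (m*d*(m*d))) = 0"
    unfolding XM_def by (intro sum.neutral ballI) (simp add: e2)
  ultimately show ?thesis unfolding Lf_def by simp
qed

lemma sep_Lf:
  assumes d: "0 < d"
  shows "(\<forall>(a,b) \<in> set xs. psd (m*d) a \<and> psd (m*d) b) \<Longrightarrow>
    foldr (\<lambda>(a,b) acc. kron a b + acc) xs (0\<^sub>m (m*d*(m*d)) (m*d*(m*d))) \<in> carrier_mat (m*d*(m*d)) (m*d*(m*d))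
    \<and> Re (Lf m d (foldr (\<lambda>(a,b) acc. kron a b + acc) xs (0\<^sub>m (m*d*(m*d)) (m*d*(m*d))))) \<ge> 0"
proof (induction xs)
  case Nil
  show ?case by (simp add: Lf_zero)
next
  case (Cons ab xs)
  obtain a b where ab: "ab = (a,b)" by (cases ab)
  have pa: "psd (m*d) a" and pb: "psd (m*d) b" using Cons.prems ab by auto
  have IH: "foldr (\<lambda>(a,b) acc. kron a b + acc) xs (0\<^sub>m (m*d*(m*d)) (m*d*(m*d))) \<in> carrier_mat (m*d*(m*d)) (m*d*(m*d))"
    "Re (Lf m d (foldr (\<lambda>(a,b) acc. kron a b + acc) xs (0\<^sub>m (m*d*(m*d)) (m*d*(m*d))))) \<ge> 0"
    using Cons.IH Cons.prems by auto
  have kc: "kron a b \<in> carrier_mat (m*d*(m*d)) (m*d*(m*d))"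
    using pa pb unfolding psd_def by (auto intro: kron_carrier)
  show ?case
    using IH kc Lf_add[OF kc IH(1)] Lf_kron[OF pa pb d] ab by simp
qed

theorem mainTheorem6:
  fixes m d :: nat and \<epsilon> \<delta> :: real
  assumes "3 \<le> m" and "m < d"
    and "psd (m*d*(m*d)) (rho_op m d \<epsilon> \<delta>)"
    and "\<epsilon> * real m ^ 2 * (real d ^ 2 - 1) + real d * real m*\<delta>*(real m - real d) < 0"
  shows "\<not> separable (m*d) (m*d) (rho_op m d \<epsilon> \<delta>)"
proof
  assume "separable (m*d) (m*d) (rho_op m d \<epsilon> \<delta>)"
  then obtain xs :: "(complex mat \<times> complex mat) list" where
    ps: "\<forall>(a,b) \<in> set xs. psd (m*d) a \<and> psd (m*d) b" and
    eq: "rho_op m d \<epsilon> \<delta> = foldr (\<lambda>(a,b) acc. kron a b + acc) xs (0\<^sub>m (m*d*(m*d)) (m*d*(m*d)))"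
    unfolding separable_def by blast
  have m: "0 < m" and d: "0 < d" using assms(1,2) by auto
  have "Re (Lf m d (rho_op m d \<epsilon> \<delta>)) \<ge> 0" unfolding eq using sep_Lf[OF d ps] by blast
  moreover have "Re (Lf m d (rho_op m d \<epsilon> \<delta>)) < 0"
    unfolding Lf_rho[OF m d] using assms(4) m by (simp add: mult_pos_neg)
  ultimately show False by simp
qed


end
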